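(* Let $n\ge 4$, $N=\{1,\dots,n\}$, fix distinct $i_1,i_2\in N$ and let $\hat N^c=N\setminus\{i_1,i_2\}$. Then the inequality $$x_{i_1i_2}+\sum_{j\in\hat N^c}\left(x_{i_1j}+x_{ji_1}\right)-\sum_{j\in\hat N^c}x_{ji_2}-\sum_{j,j'\in\hat N^c:\,j\ne j'} x_{jj'}\le 2-\frac{(n-3)(n-4)}{2}$$ is a valid inequality for the weak order polytope $P^n_{WO}$, i.e. it holds for every point $x\in P^n_{WO}$.
   Context: Let $N=\{1,\dots,n\}$ and $A_N=\{(i,j): i,j\in N, i\ne j\}$. A weak order on $N$ is a binary relation $W\subseteq N\times N$ that is reflexive, transitive and total; $(i,j)\in W$ is read "$i$ is preferred over or tied with $j$". The characteristic vector of $W$ is $x^W\in\{0,1\}^{A_N}$ with $x^W_{(i,j)}=1$ if $(i,j)\in W$ and $0$ otherwise. The weak order polytope $P^n_{WO}$ is the convex hull of the characteristic vectors of all weak orders on $N$; its points are vectors $x\in\mathbb{R}^{A_N}$ and $x_{ij}$ denotes the coordinate $x_{(i,j)}$. *)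

theory Defs
  imports "HOL-Analysis.Analysis"
begin

definition arcs :: "nat \<Rightarrow> (nat \<times> nat) set" where
  "arcs n = {(i, j). i \<in> {1..n} \<and> j \<in> {1..n} \<and> i \<noteq> j}"

definition weak_order :: "nat \<Rightarrow> (nat \<times> nat) set \<Rightarrow> bool" where
  "weak_order n W \<longleftrightarrow>
     W \<subseteq> {1..n} \<times> {1..n} \<and>
     (\<forall>i\<in>{1..n}. (i, i) \<in> W) \<and>
     (\<forall>i j k. (i, j) \<in> W \<longrightarrow> (j, k) \<in> W \<longrightarrow> (i, k) \<in> W) \<and>
     (\<forall>i\<in>{1..n}. \<forall>j\<in>{1..n}. (i, j) \<in> W \<or> (j, i) \<in> W)"

text \<open>Characteristic vector in R^{A_N}; represented as a function on nat \<times> nat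
  which is 0 outside A_N (only coordinates in A_N are meaningful).\<close>

definition charvec :: "nat \<Rightarrow> (nat \<times> nat) set \<Rightarrow> (nat \<times> nat) \<Rightarrow> real" where
  "charvec n W a = (if a \<in> arcs n \<and> a \<in> W then 1 else 0)"

text \<open>The weak order polytope: convex hull of the characteristic vectors, i.e. the set of
  convex combinations of finitely many of them (there are finitely many weak orders).
  A point is a vector in R^{A_N}, given by its coordinates on A_N.\<close>

definition weak_order_polytope :: "nat \<Rightarrow> ((nat \<times> nat) \<Rightarrow> real) set" where
  "weak_order_polytope n =
     {x. \<exists>c :: (nat \<times> nat) set \<Rightarrow> real.
           (\<forall>W. 0 \<le> c W) \<and>
           (\<Sum>W\<in>{W. weak_order n W}. c W) = 1 \<and>
           (\<forall>a\<in>arcs n. x a = (\<Sum>W\<in>{W. weak_order n W}. c W * charvec n W a))}"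

end

theory Submission
  imports Defs
begin

definition Lf :: "nat \<Rightarrow> nat \<Rightarrow> nat \<Rightarrow> ((nat \<times> nat) \<Rightarrow> real) \<Rightarrow> real" where
 "Lf n i1 i2 x = x (i1, i2)
           + (\<Sum>j\<in>{1..n} - {i1, i2}. x (i1, j) + x (j, i1))
           - (\<Sum>j\<in>{1..n} - {i1, i2}. x (j, i2))
           - (\<Sum>(j, j')\<in>{(j, j'). j \<in> {1..n} - {i1, i2} \<and> j' \<in> {1..n} - {i1, i2} \<and> j \<noteq> j'}. x (j, j'))"

lemma Lf_lin:
  assumes "finite S"
  shows "Lf n i1 i2 (\<lambda>a. \<Sum>W\<in>S. c W * v W a) = (\<Sum>W\<in>S. c W * Lf n i1 i2 (v W))"
  unfolding Lf_def
  by (simp add: sum_distrib_left sum_subtractf sum.distrib case_prod_unfold sum.swap[of _ S] algebra_simps)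

lemma Lf_cong:
  assumes "\<forall>a\<in>arcs n. x a = y a" "i1 \<in> {1..n}" "i2 \<in> {1..n}" "i1 \<noteq> i2"
  shows "Lf n i1 i2 x = Lf n i1 i2 y"
proof -
  have "x (i1,i2) = y (i1,i2)" using assms by (auto simp: arcs_def)
  moreover have "(\<Sum>j\<in>{1..n} - {i1, i2}. x (i1, j) + x (j, i1)) = (\<Sum>j\<in>{1..n} - {i1, i2}. y (i1, j) + y (j, i1))"
    using assms by (intro sum.cong) (auto simp: arcs_def)
  moreover have "(\<Sum>j\<in>{1..n} - {i1, i2}. x (j, i2)) = (\<Sum>j\<in>{1..n} - {i1, i2}. y (j, i2))"
    using assms by (intro sum.cong) (auto simp: arcs_def)
  moreover have "(\<Sum>(j, j')\<in>{(j, j'). j \<in> {1..n} - {i1, i2} \<and> j' \<in> {1..n} - {i1, i2} \<and> j \<noteq> j'}. x (j, j'))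
     = (\<Sum>(j, j')\<in>{(j, j'). j \<in> {1..n} - {i1, i2} \<and> j' \<in> {1..n} - {i1, i2} \<and> j \<noteq> j'}. y (j, j'))"
    using assms by (intro sum.cong) (auto simp: arcs_def)
  ultimately show ?thesis unfolding Lf_def by simp
qed

lemma finite_wo: "finite {W. weak_order n W}"
proof -
  have "{W. weak_order n W} \<subseteq> Pow ({1..n} \<times> {1..n})" by (auto simp: weak_order_def)
  thus ?thesis by (rule finite_subset) simp
qed


lemma card_offdiag:
  assumes "finite T"
  shows "card {(j, j'). j \<in> T \<and> j' \<in> T \<and> j \<noteq> j'} = card T * card T - card T"
proof -
  have e: "{(j, j'). j \<in> T \<and> j' \<in> T \<and> j \<noteq> j'} = T \<times> T - (\<lambda>j. (j,j)) ` T" by auto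
  have "card ((\<lambda>j. (j,j)) ` T) = card T" by (rule card_image) (auto simp: inj_on_def)
  moreover have "(\<lambda>j. (j,j)) ` T \<subseteq> T \<times> T" by auto
  ultimately show ?thesis unfolding e using assms
    by (simp add: card_Diff_subset card_cartesian_product finite_imageI)
qed

lemma W_bound:
  assumes wo: "weak_order n W" and n4: "n \<ge> 4"
    and i: "i1 \<in> {1..n}" "i2 \<in> {1..n}" "i1 \<noteq> i2"
  shows "Lf n i1 i2 (charvec n W) \<le> 2 - real ((n - 3) * (n - 4)) / 2"
proof -
  define M where "M = {1..n} - {i1, i2}"
  define P where "P = {(j, j'). j \<in> M \<and> j' \<in> M \<and> j \<noteq> j'}"
  define T where "T = {j\<in>M. (i1,j) \<in> W \<and> (j,i1) \<in> W}"
  define r where "r = charvec n W"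
  have finM: "finite M" unfolding M_def by simp
  have finT: "finite T" unfolding T_def using finM by simp
  have TM: "T \<subseteq> M" unfolding T_def by auto
  have finP: "finite P"
  proof (rule finite_subset)
    show "P \<subseteq> M \<times> M" unfolding P_def by auto
  qed (simp add: finM)
  have cM: "card M = n - 2" unfolding M_def using i by (simp add: card_Diff_subset)
  have wtrans: "\<And>a b c. (a,b) \<in> W \<Longrightarrow> (b,c) \<in> W \<Longrightarrow> (a,c) \<in> W" using wo unfolding weak_order_def by blast
  have wtot: "\<And>a b. a \<in> {1..n} \<Longrightarrow> b \<in> {1..n} \<Longrightarrow> (a,b) \<in> W \<or> (b,a) \<in> W" using wo unfolding weak_order_def by blast
  have rP: "\<And>p. p \<in> P \<Longrightarrow> r p = (if p \<in> W then 1 else 0)"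
    unfolding r_def charvec_def P_def M_def arcs_def by auto
  have L: "Lf n i1 i2 r = r (i1,i2) + (\<Sum>j\<in>M. r (i1, j) + r (j, i1)) - (\<Sum>j\<in>M. r (j, i2)) - (\<Sum>p\<in>P. r p)"
    unfolding Lf_def M_def P_def by (simp add: case_prod_unfold)
  define a :: real where "a = (if (i1,i2) \<in> W then 1 else 0)"
  have ra: "r (i1,i2) = a" unfolding a_def r_def charvec_def arcs_def using i by auto
  have s1: "(\<Sum>j\<in>M. r (i1, j) + r (j, i1)) = (\<Sum>j\<in>M. 1 + (if j \<in> T then 1 else 0))"
  proof (rule sum.cong)
    fix j assume j: "j \<in> M"
    hence "(i1,j) \<in> arcs n" "(j,i1) \<in> arcs n" using i unfolding M_def arcs_def by auto
    moreover have "(i1,j) \<in> W \<or> (j,i1) \<in> W" using wtot j i unfolding M_def by auto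
    ultimately show "r (i1, j) + r (j, i1) = 1 + (if j \<in> T then 1 else 0)"
      unfolding r_def charvec_def T_def using j by auto
  qed simp
  also have "\<dots> = real (card M) + real (card T)"
    using finM TM by (simp add: sum.distrib sum.If_cases Int_absorb1 Int_commute)
  finally have S1: "(\<Sum>j\<in>M. r (i1, j) + r (j, i1)) = real (card M) + real (card T)" .
  have rnn: "\<And>p. r p \<ge> 0" unfolding r_def charvec_def by auto
  have S2: "(\<Sum>j\<in>M. r (j, i2)) \<ge> a * real (card T)"
  proof (cases "(i1,i2) \<in> W")
    case True
    have "(\<Sum>j\<in>T. r (j, i2)) = (\<Sum>j\<in>T. 1)"
    proof (rule sum.cong)
      fix j assume j: "j \<in> T"
      hence "(j,i2) \<in> W" using wtrans True unfolding T_def by blast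
      moreover have "(j,i2) \<in> arcs n" using j i unfolding T_def M_def arcs_def by auto
      ultimately show "r (j, i2) = 1" unfolding r_def charvec_def by simp
    qed simp
    moreover have "(\<Sum>j\<in>T. r (j, i2)) \<le> (\<Sum>j\<in>M. r (j, i2))"
      by (rule sum_mono2[OF finM TM]) (simp add: rnn)
    ultimately show ?thesis using True unfolding a_def by simp
  next
    case False thus ?thesis unfolding a_def by (simp add: sum_nonneg rnn)
  qed
  define PT where "PT = {(j, j'). j \<in> T \<and> j' \<in> T \<and> j \<noteq> j'}"
  have PTP: "PT \<subseteq> P" unfolding PT_def P_def using TM by auto
  have swapP: "(\<Sum>p\<in>P. r (prod.swap p)) = (\<Sum>p\<in>P. r p)"
  proof -
    have "prod.swap ` P = P" unfolding P_def by (auto simp: image_iff)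
    hence "(\<Sum>p\<in>P. r p) = (\<Sum>p\<in>prod.swap ` P. r p)" by simp
    also have "\<dots> = (\<Sum>p\<in>P. r (prod.swap p))"
      by (subst sum.reindex) (auto simp: inj_on_def)
    finally show ?thesis by simp
  qed
  have "2 * (\<Sum>p\<in>P. r p) = (\<Sum>p\<in>P. r p + r (prod.swap p))"
    using swapP by (simp add: sum.distrib)
  also have "\<dots> \<ge> (\<Sum>p\<in>P. 1 + (if p \<in> PT then 1 else 0))"
  proof (rule sum_mono)
    fix p assume p: "p \<in> P"
    obtain j j' where pj: "p = (j,j')" by (cases p)
    have sp: "prod.swap p \<in> P" using p unfolding P_def pj by auto
    have jj: "j \<in> {1..n}" "j' \<in> {1..n}" using p unfolding pj P_def M_def by auto
    have tot: "(j,j') \<in> W \<or> (j',j) \<in> W" using wtot jj by auto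
    have "p \<in> PT \<Longrightarrow> (j,j') \<in> W \<and> (j',j) \<in> W"
      unfolding PT_def T_def pj using wtrans by blast
    thus "1 + (if p \<in> PT then 1 else 0) \<le> r p + r (prod.swap p)"
      using rP[OF p] rP[OF sp] tot unfolding pj by auto
  qed
  also have "(\<Sum>p\<in>P. 1 + (if p \<in> PT then 1 else 0)) = real (card P) + real (card PT)"
    using finP PTP by (simp add: sum.distrib sum.If_cases Int_absorb1 Int_absorb2 Int_commute)
  finally have S3: "2 * (\<Sum>p\<in>P. r p) \<ge> real (card P) + real (card PT)" .
  have cP: "card P = card M * card M - card M" unfolding P_def by (rule card_offdiag[OF finM])
  have cPT: "card PT = card T * card T - card T" unfolding PT_def by (rule card_offdiag[OF finT])
  define m where "m = card M"
  define t where "t = card T"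
  have rcP: "real (card P) = real m * real m - real m" unfolding cP m_def
    by (simp add: of_nat_diff)
  have rcPT: "real (card PT) = real t * real t - real t" unfolding cPT t_def
    by (simp add: of_nat_diff)
  have m2: "m + 2 = n" unfolding m_def cM using n4 by simp
  have rhs: "real ((n - 3) * (n - 4)) = (real m - 1) * (real m - 2)"
  proof -
    have "n - 3 = m - 1" "n - 4 = m - 2" "m \<ge> 2" using m2 n4 by auto
    thus ?thesis by (simp only: of_nat_mult of_nat_diff) simp
  qed
  have a01: "a = 0 \<or> a = 1" unfolding a_def by simp
  have tq: "(real t - 1) * (real t - 2) \<ge> 0"
  proof (cases "t \<le> 1")
    case True thus ?thesis by (cases t) auto
  next
    case False thus ?thesis by (intro mult_nonneg_nonneg) auto
  qed
  have "Lf n i1 i2 r \<le> a + (real m + real t) - a * real t - (real m * real m - real m + (real t * real t - real t)) / 2"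
  proof -
    have "Lf n i1 i2 r \<le> a + (real m + real t) - a * real t - (real (card P) + real (card PT)) / 2"
    proof -
      have e: "Lf n i1 i2 r = a + (real m + real t) - (\<Sum>j\<in>M. r (j, i2)) - (\<Sum>p\<in>P. r p)"
        using L ra S1 unfolding m_def t_def by simp
      have h3: "(\<Sum>p\<in>P. r p) \<ge> (real (card P) + real (card PT)) / 2" using S3 by simp
      show ?thesis unfolding e m_def t_def using S2 h3 by linarith
    qed
    thus ?thesis unfolding rcP rcPT .
  qed
  also have "\<dots> \<le> 2 - (real m - 1) * (real m - 2) / 2"
  proof -
    have tt: "real t * real t \<ge> real t" by (cases t) auto
    show ?thesis using a01 tq tt by (auto simp: field_simps)
  qed
  finally show ?thesis unfolding r_def rhs .
qed

theorem mainTheorem3: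
  fixes n i1 i2 :: nat and x :: "(nat \<times> nat) \<Rightarrow> real"
  assumes "n \<ge> 4"
    and "i1 \<in> {1..n}" and "i2 \<in> {1..n}" and "i1 \<noteq> i2"
    and "x \<in> weak_order_polytope n"
  shows "x (i1, i2)
           + (\<Sum>j\<in>{1..n} - {i1, i2}. x (i1, j) + x (j, i1))
           - (\<Sum>j\<in>{1..n} - {i1, i2}. x (j, i2))
           - (\<Sum>(j, j')\<in>{(j, j'). j \<in> {1..n} - {i1, i2} \<and> j' \<in> {1..n} - {i1, i2} \<and> j \<noteq> j'}. x (j, j'))
         \<le> 2 - real ((n - 3) * (n - 4)) / 2"
proof -
  let ?S = "{W. weak_order n W}"
  let ?R = "2 - real ((n - 3) * (n - 4)) / 2"
  obtain c where c0: "\<forall>W. 0 \<le> c W" and c1: "(\<Sum>W\<in>?S. c W) = 1"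
    and cx: "\<forall>a\<in>arcs n. x a = (\<Sum>W\<in>?S. c W * charvec n W a)"
    using assms(5) unfolding weak_order_polytope_def by blast
  have "Lf n i1 i2 x = Lf n i1 i2 (\<lambda>a. \<Sum>W\<in>?S. c W * charvec n W a)"
    by (rule Lf_cong) (use cx assms in auto)
  also have "\<dots> = (\<Sum>W\<in>?S. c W * Lf n i1 i2 (charvec n W))"
    by (rule Lf_lin[OF finite_wo])
  also have "\<dots> \<le> (\<Sum>W\<in>?S. c W * ?R)"
    by (rule sum_mono, rule mult_left_mono) (use W_bound assms c0 in auto)
  also have "\<dots> = ?R" using c1 by (simp add: sum_distrib_right[symmetric])
  finally show ?thesis unfolding Lf_def .
qed

end
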